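(* Let $\mathcal{X}$ be a non-empty set and $\mathcal{B}\subseteq\mathcal{P}(\mathcal{X})\setminus\{\emptyset\}$ such that $\mathcal{B}^*:=\mathcal{B}\cup\{\emptyset\}$ is a sigma field. Then for any $g\in\mathcal{G}_{\geq0}(\mathcal{X})$, $g$ is $\mathcal{B}^*$-measurable in the usual measure-theoretic sense if and only if $g$ is $\mathcal{B}$-measurable in the sense defined below.
   Context: $\mathcal{G}_{\geq0}(\mathcal{X})$ is the set of bounded non-negative real functions on $\mathcal{X}$; $\mathbb{I}_B$ is the indicator of $B$. A function $g\in\mathcal{G}_{\geq0}(\mathcal{X})$ is simple $\mathcal{B}$-measurable if there are $c_0\geq0$, $n\in\mathbb{N}\cup\{0\}$ and, for $k=1,\dots,n$, $c_k\geq0$ and $B_k\in\mathcal{B}$ with $g=c_0+\sum_{k=1}^nc_k\mathbb{I}_{B_k}$. A function $g\in\mathcal{G}_{\geq0}(\mathcal{X})$ is $\mathcal{B}$-measurable if there is a sequence $(g_n)_{n\in\mathbb{N}}$ of simple $\mathcal{B}$-measurable functions in $\mathcal{G}_{\geq0}(\mathcal{X})$ with $\lim_{n\to\infty}\sup_{x}|g(x)-g_n(x)|=0$. *)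

theory Defs
  imports "HOL-Analysis.Analysis"
begin

definition G_nonneg :: "'a set \<Rightarrow> ('a \<Rightarrow> real) set" where
  "G_nonneg X = {g. (\<forall>x\<in>X. 0 \<le> g x) \<and> (\<exists>M. \<forall>x\<in>X. \<bar>g x\<bar> \<le> M)}"

definition simple_B_measurable :: "'a set \<Rightarrow> 'a set set \<Rightarrow> ('a \<Rightarrow> real) \<Rightarrow> bool" where
  "simple_B_measurable X B g \<longleftrightarrow> g \<in> G_nonneg X \<and>
     (\<exists>(c0::real) (n::nat) (c::nat \<Rightarrow> real) (Bs::nat \<Rightarrow> 'a set).
        c0 \<ge> 0 \<and> (\<forall>k\<in>{1..n}. c k \<ge> 0 \<and> Bs k \<in> B) \<and>
        (\<forall>x\<in>X. g x = c0 + (\<Sum>k=1..n. c k * indicator (Bs k) x)))"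

definition B_measurable :: "'a set \<Rightarrow> 'a set set \<Rightarrow> ('a \<Rightarrow> real) \<Rightarrow> bool" where
  "B_measurable X B g \<longleftrightarrow> g \<in> G_nonneg X \<and>
     (\<exists>gs::nat \<Rightarrow> 'a \<Rightarrow> real. (\<forall>n. simple_B_measurable X B (gs n)) \<and>
        (\<lambda>n. SUP x\<in>X. \<bar>g x - gs n x\<bar>) \<longlonglongrightarrow> 0)"

end

theory Submission
  imports Defs
begin

theorem proposition3:
  fixes X :: "'a set" and B :: "'a set set" and g :: "'a \<Rightarrow> real"
  assumes "X \<noteq> {}"
    and "B \<subseteq> Pow X - {{}}"
    and "sigma_algebra X (insert {} B)"
    and "g \<in> G_nonneg X"
  shows "g \<in> borel_measurable (sigma X (insert {} B))
         \<longleftrightarrow> B_measurable X B g"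
proof -
  let ?M = "sigma X (insert {} B)"
  have setsM: "sets ?M = insert {} B"
    using sigma_algebra.sets_measure_of_eq[OF assms(3)] by simp
  have spaceM: "space ?M = X"
    using sigma_algebra.space_measure_of_eq[OF assms(3)] by simp
  have XB: "X \<in> B"
    using algebra.top[OF sigma_algebra.axioms(1)[OF assms(3)]] assms(1) by auto
  obtain M0 where M0: "\<forall>x\<in>X. \<bar>g x\<bar> \<le> M0" and gnn: "\<forall>x\<in>X. 0 \<le> g x"
    using assms(4) unfolding G_nonneg_def by auto
  define M where "M = max M0 0"
  have Mb: "\<forall>x\<in>X. g x \<le> M" "M \<ge> 0" using M0 unfolding M_def by force+
  show ?thesis
  proof
    assume gm: "g \<in> borel_measurable ?M"
    define d where "d = (\<lambda>n::nat. 1 / real (Suc n))"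
    define N where "N = (\<lambda>n::nat. nat \<lceil>M * real (Suc n)\<rceil>)"
    define L where "L = (\<lambda>n (j::nat). {x\<in>X. real j * d n \<le> g x})"
    define gs where "gs = (\<lambda>n x. \<Sum>j=1..N n. d n * indicator (L n j) x)"
    have dpos: "d n > 0" for n unfolding d_def by simp
    have LB: "L n j \<in> insert {} B" for n j
    proof -
      have "g -` {real j * d n..} \<inter> space ?M \<in> sets ?M"
        using measurable_sets[OF gm] by auto
      moreover have "g -` {real j * d n..} \<inter> space ?M = L n j"
        unfolding L_def spaceM by auto
      ultimately show ?thesis using setsM by simp
    qed
    have key: "0 \<le> g x - gs n x \<and> g x - gs n x \<le> d n" if x: "x \<in> X" for n x
    proof -
      define k where "k = nat \<lfloor>g x * real (Suc n)\<rfloor>"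
      have gx0: "g x \<ge> 0" using gnn x by auto
      have kle: "real k \<le> g x * real (Suc n)" unfolding k_def using gx0 by simp
      have klt: "g x * real (Suc n) < real k + 1" unfolding k_def using gx0 by linarith
      have "g x * real (Suc n) \<le> M * real (Suc n)"
        using Mb x by (simp add: mult_right_mono)
      hence kN: "k \<le> N n" unfolding k_def N_def
        by (metis floor_le_ceiling floor_mono le_nat_iff nat_mono order_trans dual_order.refl of_nat_0_le_iff)
      have iff: "x \<in> L n j \<longleftrightarrow> j \<le> k" for j
      proof -
        have "x \<in> L n j \<longleftrightarrow> real j \<le> g x * real (Suc n)"
          unfolding L_def d_def using x by (simp add: field_simps)
        also have "\<dots> \<longleftrightarrow> j \<le> k"
        proof
          assume "real j \<le> g x * real (Suc n)"
          hence "real j < real k + 1" using klt by linarith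
          thus "j \<le> k" by linarith
        next
          assume "j \<le> k" thus "real j \<le> g x * real (Suc n)" using kle by linarith
        qed
        finally show ?thesis .
      qed
      have "gs n x = (\<Sum>j\<in>{1..N n}. if j \<le> k then d n else 0)"
        unfolding gs_def by (intro sum.cong) (auto simp: indicator_def iff)
      also have "\<dots> = (\<Sum>j\<in>{j\<in>{1..N n}. j \<le> k}. d n)"
        by (rule sum.inter_filter[symmetric]) simp
      also have "{j\<in>{1..N n}. j \<le> k} = {1..k}" using kN by auto
      finally have "gs n x = real k * d n" by simp
      moreover have "real k * d n \<le> g x" using kle unfolding d_def
        by (simp add: divide_le_eq mult.commute)
      moreover have "g x < real k * d n + d n" using klt unfolding d_def
        by (simp add: field_simps)
      ultimately show ?thesis by simp
    qed
    have simp: "simple_B_measurable X B (gs n)" for n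
    proof -
      define c where "c = (\<lambda>j. if L n j = {} then 0 else d n)"
      define Bs where "Bs = (\<lambda>j. if L n j = {} then X else L n j)"
      have nn: "\<forall>x\<in>X. 0 \<le> gs n x"
        unfolding gs_def using dpos by (intro ballI sum_nonneg) (simp add: less_imp_le)
      have bd: "\<forall>x\<in>X. \<bar>gs n x\<bar> \<le> real (N n) * d n"
      proof
        fix x assume "x \<in> X"
        have "gs n x \<le> (\<Sum>j=1..N n. d n)"
          unfolding gs_def using dpos
          by (intro sum_mono) (simp add: indicator_def less_imp_le)
        thus "\<bar>gs n x\<bar> \<le> real (N n) * d n" using nn \<open>x \<in> X\<close> by simp
      qed
      have "gs n \<in> G_nonneg X" unfolding G_nonneg_def using nn bd by blast
      moreover have "\<forall>k\<in>{1..N n}. c k \<ge> 0 \<and> Bs k \<in> B"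
        using LB XB dpos unfolding c_def Bs_def by (auto simp: less_imp_le)
      moreover have "\<forall>x\<in>X. gs n x = 0 + (\<Sum>k=1..N n. c k * indicator (Bs k) x)"
        unfolding gs_def c_def Bs_def
        by (intro ballI) (simp only: add_0_left, intro sum.cong, auto simp: indicator_def)
      ultimately show ?thesis unfolding simple_B_measurable_def by blast
    qed
    have supb: "(SUP x\<in>X. \<bar>g x - gs n x\<bar>) \<le> d n" "0 \<le> (SUP x\<in>X. \<bar>g x - gs n x\<bar>)" for n
    proof -
      show "(SUP x\<in>X. \<bar>g x - gs n x\<bar>) \<le> d n"
        using key assms(1) by (intro cSUP_least) auto
      obtain x where "x \<in> X" using assms(1) by auto
      have bdd: "bdd_above ((\<lambda>x. \<bar>g x - gs n x\<bar>) ` X)"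
        using key by (intro bdd_aboveI[where M="d n"]) auto
      have "0 \<le> \<bar>g x - gs n x\<bar>" by simp
      also have "\<dots> \<le> (SUP x\<in>X. \<bar>g x - gs n x\<bar>)" using cSUP_upper[OF \<open>x \<in> X\<close> bdd] .
      finally show "0 \<le> (SUP x\<in>X. \<bar>g x - gs n x\<bar>)" .
    qed
    have "d \<longlonglongrightarrow> 0" unfolding d_def using LIMSEQ_inverse_real_of_nat by (simp add: inverse_eq_divide)
    hence "(\<lambda>n. SUP x\<in>X. \<bar>g x - gs n x\<bar>) \<longlonglongrightarrow> 0"
      by (rule Lim_null_comparison[rotated]) (use supb in auto)
    thus "B_measurable X B g" unfolding B_measurable_def using assms(4) simp by blast
  next
    assume "B_measurable X B g"
    then obtain gs where sm: "\<And>n. simple_B_measurable X B (gs n)"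
      and lim: "(\<lambda>n. SUP x\<in>X. \<bar>g x - gs n x\<bar>) \<longlonglongrightarrow> 0"
      unfolding B_measurable_def by blast
    have meas: "gs n \<in> borel_measurable ?M" for n
    proof -
      obtain c0 and m :: nat and c Bs where h: "\<forall>k\<in>{1..m}. c k \<ge> 0 \<and> Bs k \<in> B"
        "\<forall>x\<in>X. gs n x = c0 + (\<Sum>k=1..m. c k * indicator (Bs k) x)"
        using sm[of n] unfolding simple_B_measurable_def by (elim conjE exE) (rule that, assumption+)
      have "(\<lambda>x. c0 + (\<Sum>k=1..m. c k * indicator (Bs k) x)) \<in> borel_measurable ?M"
      proof (rule borel_measurable_add)
        show "(\<lambda>x. c0) \<in> borel_measurable ?M" by simp
        show "(\<lambda>x. \<Sum>k=1..m. c k * indicator (Bs k) x) \<in> borel_measurable ?M"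
        proof (rule borel_measurable_sum)
          fix k assume "k \<in> {1..m}"
          hence "Bs k \<in> sets ?M" using h(1) setsM by auto
          thus "(\<lambda>x. c k * indicator (Bs k) x) \<in> borel_measurable ?M"
            by (intro borel_measurable_times) auto
        qed
      qed
      moreover have "((\<lambda>x. c0 + (\<Sum>k=1..m. c k * indicator (Bs k) x)) \<in> borel_measurable ?M)
          = (gs n \<in> borel_measurable ?M)"
        by (rule measurable_cong) (use h(2) spaceM in simp)
      ultimately show ?thesis by simp
    qed
    have conv: "(\<lambda>n. gs n x) \<longlonglongrightarrow> g x" if x: "x \<in> X" for x
    proof -
      have "\<bar>g x - gs n x\<bar> \<le> (SUP x\<in>X. \<bar>g x - gs n x\<bar>)" for n
      proof -
        obtain Mn where Mn: "\<forall>x\<in>X. \<bar>gs n x\<bar> \<le> Mn"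
          using sm[of n] unfolding simple_B_measurable_def G_nonneg_def by blast
        have "bdd_above ((\<lambda>x. \<bar>g x - gs n x\<bar>) ` X)"
        proof (intro bdd_aboveI[where M="M0 + Mn"])
          fix y assume "y \<in> (\<lambda>x. \<bar>g x - gs n x\<bar>) ` X"
          then obtain z where "z \<in> X" "y = \<bar>g z - gs n z\<bar>" by auto
          have "\<bar>g z\<bar> \<le> M0" "\<bar>gs n z\<bar> \<le> Mn" using M0 Mn \<open>z \<in> X\<close> by auto
          thus "y \<le> M0 + Mn" using \<open>y = _\<close> by linarith
        qed
        thus ?thesis by (rule cSUP_upper[OF x])
      qed
      hence "(\<lambda>n. gs n x - g x) \<longlonglongrightarrow> 0"
        by (intro Lim_null_comparison[OF _ lim]) (simp add: abs_minus_commute)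
      thus ?thesis by (rule LIM_zero_cancel)
    qed
    show "g \<in> borel_measurable ?M"
      by (rule borel_measurable_LIMSEQ_real[where u=gs]) (use conv meas spaceM in auto)
  qed
qed

end
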